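(* Let $p$ be a prime and identify $(\mathbb Z/p\mathbb Z)^\infty=\bigoplus_{n\ge1}\mathbb Z/p\mathbb Z$ with the additive group of the polynomial ring $\mathbb F_p[t]$. Let $N\in\mathbb N$ and suppose there is a set $B\subseteq\mathbb F_p^N$ with $|B|>p^{N/2+1}$ containing no pattern of the form $\{y,\;y+(x_1,x_2,\dots,x_N),\;y+(0,x_1,x_2,\dots,x_{N-1})\}$ with $y\in\mathbb F_p^N$ and $(x_1,\dots,x_N)\ne0$. Then there is a measure-preserving system $(X,\mathcal B,\mu,(T_n)_{n\in\mathbb F_p[t]})$ and a set $A\in\mathcal B$ with $\mu(A)>0$ such that $$\mu(A\cap T_nA\cap T_{tn}A)\le\Big(\frac{p^{N/2+1}}{|B|}\Big)^2\mu(A)^3<\mu(A)^3$$ for all $n\ne0$.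
   Context: $T_{tn}$ denotes the action of the polynomial $tn\in\mathbb F_p[t]$; "nontrivial pattern" means $(x_1,\dots,x_N)\neq 0$. *)

theory Defs
  imports "HOL-Probability.Probability" "Berlekamp_Zassenhaus.Finite_Field"
begin

definition mp_map :: "'x measure \<Rightarrow> ('x \<Rightarrow> 'x) \<Rightarrow> bool" where
  "mp_map M f \<longleftrightarrow> f \<in> M \<rightarrow>\<^sub>M M \<and>
     (\<forall>A \<in> sets M. emeasure M (f -` A \<inter> space M) = emeasure M A)"

definition mps :: "'x measure \<Rightarrow> ('g::ab_group_add \<Rightarrow> 'x \<Rightarrow> 'x) \<Rightarrow> bool" where
  "mps M T \<longleftrightarrow> prob_space M \<and> (\<forall>n. mp_map M (T n)) \<and>
     (\<forall>x \<in> space M. T 0 x = x) \<and>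
     (\<forall>m n. \<forall>x \<in> space M. T (m + n) x = T m (T n x))"

definition shiftv :: "'a::zero list \<Rightarrow> 'a list" where
  "shiftv xs = (if xs = [] then [] else 0 # butlast xs)"

definition vadd :: "'a::plus list \<Rightarrow> 'a list \<Rightarrow> 'a list" where
  "vadd xs ys = map2 (+) xs ys"

definition pattern_free :: "nat \<Rightarrow> 'a::{zero,plus} list set \<Rightarrow> bool" where
  "pattern_free N B \<longleftrightarrow> (\<forall>y x. length y = N \<longrightarrow> length x = N \<longrightarrow> x \<noteq> replicate N 0 \<longrightarrow>
      \<not> (y \<in> B \<and> vadd y x \<in> B \<and> vadd y (shiftv x) \<in> B))"

end

theory Submission
  imports Defs
begin


lemma lborel_translate:
  fixes a :: real
  assumes "X \<in> sets borel"
  shows "emeasure lborel ((\<lambda>u. u + a) -` X) = emeasure lborel X"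
proof -
  have "emeasure lborel X = emeasure (distr lborel borel ((+) a)) X"
    by (simp add: lborel_distr_plus)
  also have "\<dots> = emeasure lborel ((+) a -` X \<inter> space lborel)"
    using assms by (subst emeasure_distr) auto
  moreover have "(\<lambda>u. u + a) = (+) a" by (auto simp: add.commute)
  ultimately show ?thesis by simp
qed

lemma floor_cell_sets: "{u::real. \<lfloor>c*u\<rfloor> = m} \<in> sets borel"
proof -
  have "(\<lambda>u::real. \<lfloor>c*u\<rfloor>) \<in> borel \<rightarrow>\<^sub>M count_space UNIV" by measurable
  then have "(\<lambda>u::real. \<lfloor>c*u\<rfloor>) -` {m} \<inter> space borel \<in> sets borel"
    by (rule measurable_sets) auto
  then show ?thesis by (simp add: vimage_def)
qed

lemma floor_set_sets: "{u::real. \<lfloor>c*u\<rfloor> \<in> S} \<in> sets borel"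
proof -
  have "(\<lambda>u::real. \<lfloor>c*u\<rfloor>) \<in> borel \<rightarrow>\<^sub>M count_space UNIV" by measurable
  then have "(\<lambda>u::real. \<lfloor>c*u\<rfloor>) -` S \<inter> space borel \<in> sets borel"
    by (rule measurable_sets) auto
  then show ?thesis by (simp add: vimage_def)
qed

lemma piecewise_translation:
  fixes c :: real and W :: "int set" and \<pi> :: "int \<Rightarrow> int" and A :: "real set"
  assumes c: "c > 0" and W: "finite W" and bij: "bij_betw \<pi> W W" and A: "A \<in> sets borel"
  shows "emeasure lborel {u. \<lfloor>c*u\<rfloor> \<in> W \<and> u + (\<pi> \<lfloor>c*u\<rfloor> - \<lfloor>c*u\<rfloor>)/c \<in> A}
       = emeasure lborel ({u. \<lfloor>c*u\<rfloor> \<in> W} \<inter> A)"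
proof -
  define I where "I m = {u::real. \<lfloor>c*u\<rfloor> = m}" for m
  define s where "s m = real_of_int (\<pi> m - m) / c" for m
  have Ib: "I m \<in> sets borel" for m unfolding I_def by (rule floor_cell_sets)
  have key: "I m \<inter> {u. u + s m \<in> A} = (\<lambda>u. u + s m) -` (I (\<pi> m) \<inter> A)" for m
  proof -
    have "\<lfloor>c*(u + s m)\<rfloor> = \<lfloor>c*u\<rfloor> + (\<pi> m - m)" for u
    proof -
      have "c*(u + s m) = c*u + of_int (\<pi> m - m)" using c by (simp add: s_def field_simps)
      then show ?thesis by simp
    qed
    then show ?thesis unfolding I_def by auto
  qed
  have eq1: "{u. \<lfloor>c*u\<rfloor> \<in> W \<and> u + (\<pi> \<lfloor>c*u\<rfloor> - \<lfloor>c*u\<rfloor>)/c \<in> A} = (\<Union>m\<in>W. I m \<inter> {u. u + s m \<in> A})"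
    unfolding I_def s_def by auto
  have disj1: "disjoint_family_on (\<lambda>m. I m \<inter> {u. u + s m \<in> A}) W"
    unfolding disjoint_family_on_def I_def by auto
  have sets1: "(\<lambda>m. I m \<inter> {u. u + s m \<in> A}) ` W \<subseteq> sets lborel"
  proof -
    { fix m
      have "(\<lambda>u. u + s m) -` (I (\<pi> m) \<inter> A) \<in> sets borel"
      proof -
        have f: "(\<lambda>u. u + s m) \<in> borel_measurable borel" by simp
        have "(\<lambda>u. u + s m) -` (I (\<pi> m) \<inter> A) \<inter> space borel \<in> sets borel"
          using measurable_sets[OF f, of "I (\<pi> m) \<inter> A"] Ib A by auto
        then show ?thesis by simp
      qed
      then have "I m \<inter> {u. u + s m \<in> A} \<in> sets lborel" using key by simp }
    then show ?thesis by auto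
  qed
  have "emeasure lborel {u. \<lfloor>c*u\<rfloor> \<in> W \<and> u + (\<pi> \<lfloor>c*u\<rfloor> - \<lfloor>c*u\<rfloor>)/c \<in> A}
      = (\<Sum>m\<in>W. emeasure lborel (I m \<inter> {u. u + s m \<in> A}))"
    unfolding eq1 by (rule sum_emeasure[symmetric, OF sets1 disj1 W])
  also have "\<dots> = (\<Sum>m\<in>W. emeasure lborel (I (\<pi> m) \<inter> A))"
    by (intro sum.cong refl, unfold key, rule lborel_translate) (use Ib A in auto)
  also have "\<dots> = (\<Sum>m\<in>W. emeasure lborel (I m \<inter> A))"
    using sum.reindex_bij_betw[OF bij, of "\<lambda>m. emeasure lborel (I m \<inter> A)"] by simp
  also have "\<dots> = emeasure lborel (\<Union>m\<in>W. I m \<inter> A)"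
    by (rule sum_emeasure) (use Ib A W in \<open>auto simp: disjoint_family_on_def I_def\<close>)
  also have "(\<Union>m\<in>W. I m \<inter> A) = {u. \<lfloor>c*u\<rfloor> \<in> W} \<inter> A" unfolding I_def by auto
  finally show ?thesis .
qed

lemma floor_set_measure:
  fixes c :: real and S :: "int set"
  assumes c: "c > 0" and S: "finite S"
  shows "emeasure lborel {u. \<lfloor>c*u\<rfloor> \<in> S} = ennreal (real (card S) / c)"
proof -
  define I where "I m = {u::real. \<lfloor>c*u\<rfloor> = m}" for m
  have Ib: "I m \<in> sets borel" for m unfolding I_def by (rule floor_cell_sets)
  have Ieq: "I m = {of_int m / c ..< (of_int m + 1)/c}" for m
    unfolding I_def using c by (auto simp: floor_eq_iff field_simps)
  have Im: "emeasure lborel (I m) = ennreal (1/c)" for m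
    unfolding Ieq using c by (simp add: divide_simps diff_divide_distrib[symmetric])
  have "emeasure lborel {u. \<lfloor>c*u\<rfloor> \<in> S} = emeasure lborel (\<Union>m\<in>S. I m)"
    unfolding I_def by (intro arg_cong[where f="emeasure lborel"]) auto
  also have "\<dots> = (\<Sum>m\<in>S. emeasure lborel (I m))"
    by (rule sum_emeasure[symmetric]) (use Ib S in \<open>auto simp: disjoint_family_on_def I_def\<close>)
  also have "\<dots> = (\<Sum>m\<in>S. ennreal (1/c))" by (simp add: Im)
  also have "\<dots> = ennreal (real (card S) / c)"
    using c by (simp add: ennreal_of_nat_eq_real_of_nat ennreal_mult[symmetric])
  finally show ?thesis .
qed




definition dig :: "nat \<Rightarrow> nat \<Rightarrow> real \<Rightarrow> int" where
  "dig p k u = \<lfloor>real p ^ (k+1) * u\<rfloor> mod int p"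

lemma floor_level:
  assumes "p > 0"
  shows "\<lfloor>real p ^ L * u / real_of_int (int p ^ L')\<rfloor> = \<lfloor>real p ^ L * u\<rfloor> div int p ^ L'"
  by (rule floor_divide_real_eq_div) simp

lemma dig_level:
  assumes p: "p > 0" and k: "k < L"
  shows "dig p k u = (\<lfloor>real p ^ L * u\<rfloor> div int p ^ (L - 1 - k)) mod int p"
proof -
  have "real p ^ L = real p ^ (k+1) * real p ^ (L - 1 - k)"
    using k by (simp add: power_add[symmetric] del: power_Suc)
  then have "real p ^ (k+1) * u = real p ^ L * u / real_of_int (int p ^ (L - 1 - k))"
    using p by (simp add: field_simps)
  then show ?thesis unfolding dig_def using floor_level[OF p, of L u "L - 1 - k"] by simp
qed

lemma floor_from_level:
  assumes p: "p > 0"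
  shows "\<lfloor>u\<rfloor> = \<lfloor>real p ^ L * u\<rfloor> div int p ^ L"
proof -
  have "u = real p ^ L * u / real_of_int (int p ^ L)" using p by simp
  then show ?thesis using floor_level[OF p, of L u L] by simp
qed

lemma dig_shift: "dig p k (u + of_int z) = dig p k u"
proof -
  have "real p ^ (k+1) * (u + of_int z) = real p ^ (k+1) * u + of_int (int p ^ (k+1) * z)"
    by (simp add: algebra_simps)
  then have "\<lfloor>real p ^ (k+1) * (u + of_int z)\<rfloor> = \<lfloor>real p ^ (k+1) * u\<rfloor> + int p ^ (k+1) * z"
    by (simp only: floor_add_int)
  also have "int p ^ (k+1) * z = int p * (int p ^ k * z)" by simp
  finally have "\<lfloor>real p ^ (k+1) * (u + of_int z)\<rfloor> = \<lfloor>real p ^ (k+1) * u\<rfloor> + int p * (int p ^ k * z)" .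
  then show ?thesis unfolding dig_def by simp
qed

lemma dig_range: "p > 0 \<Longrightarrow> 0 \<le> dig p k u \<and> dig p k u < int p"
  unfolding dig_def by simp

definition ell :: "nat \<Rightarrow> real \<Rightarrow> 'a::comm_ring_1 poly \<Rightarrow> 'a" where
  "ell p u m = (\<Sum>i\<le>Polynomial.degree m. Polynomial.coeff m i * of_int (dig p i u))"

lemma ell_sum:
  assumes "Polynomial.degree m < K"
  shows "ell p u m = (\<Sum>i<K. Polynomial.coeff m i * of_int (dig p i u))"
  unfolding ell_def
proof (rule sum.mono_neutral_left)
  show "finite {..<K}" by simp
  show "{..Polynomial.degree m} \<subseteq> {..<K}" using assms by auto
  show "\<forall>i\<in>{..<K} - {..Polynomial.degree m}. Polynomial.coeff m i * of_int (dig p i u) = 0"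
    by (auto simp: coeff_eq_0)
qed

lemma ell_add: "ell p u (a + b) = ell p u a + ell p u b"
proof -
  define K where "K = Suc (max (Polynomial.degree a) (Polynomial.degree b))"
  have da: "Polynomial.degree a < K" and db: "Polynomial.degree b < K" unfolding K_def by auto
  have dab: "Polynomial.degree (a + b) < K"
    using degree_add_le_max[of a b] unfolding K_def by linarith
  show ?thesis
    unfolding ell_sum[OF da] ell_sum[OF db] ell_sum[OF dab]
    by (simp add: sum.distrib distrib_right)
qed

lemma ell_zero[simp]: "ell p u 0 = 0"
  unfolding ell_def by simp

lemma ell_shift: "ell p (u + of_int z) m = ell p u m"
  unfolding ell_def dig_shift ..

lemma ell_cong:
  assumes "\<And>i. i \<le> Polynomial.degree m \<Longrightarrow> dig p i u = dig p i u'"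
  shows "ell p u m = ell p u' m"
  unfolding ell_def using assms by (intro sum.cong) auto

definition phi :: "nat \<Rightarrow> nat \<Rightarrow> real \<Rightarrow> 'a::comm_ring_1 poly \<Rightarrow> 'a list" where
  "phi p N u n = map (\<lambda>j. ell p u (Polynomial.monom 1 (N - j) * n)) [0..<Suc N]"

lemma length_phi[simp]: "length (phi p N u n) = Suc N"
  unfolding phi_def by simp

lemma length_vadd[simp]: "length (vadd xs ys) = min (length xs) (length ys)"
  unfolding vadd_def by simp

lemma nth_vadd: "i < length xs \<Longrightarrow> i < length ys \<Longrightarrow> vadd xs ys ! i = xs ! i + ys ! i"
  unfolding vadd_def by simp

lemma phi_add: "phi p N u (m + n) = vadd (phi p N u m) (phi p N u n)"
  by (rule nth_equalityI) (auto simp: nth_vadd phi_def distrib_left ell_add simp del: upt_Suc)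

lemma phi_zero: "phi p N u 0 = replicate (Suc N) 0"
  unfolding phi_def by (rule nth_equalityI) (auto simp del: upt_Suc replicate_Suc)

lemma phi_shift: "phi p N (u + of_int z) n = phi p N u n"
  unfolding phi_def ell_shift ..



definition Tr :: "nat \<Rightarrow> nat \<Rightarrow> nat \<Rightarrow> (nat \<Rightarrow> 'a::comm_ring_1 list) \<Rightarrow> 'a poly \<Rightarrow> real \<Rightarrow> real" where
  "Tr p N q e n u = (if 0 \<le> u \<and> u < real q
     then u + (real (inv_into {0..<q} e (vadd (e (nat \<lfloor>u\<rfloor>)) (phi p N u n))) - of_int \<lfloor>u\<rfloor>)
     else u)"

locale sys =
  fixes p N q :: nat and e :: "nat \<Rightarrow> 'a::comm_ring_1 list"
  assumes p1: "p > 1"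
    and bij: "bij_betw e {0..<q} {xs. length xs = Suc N}"
begin

abbreviation "T \<equiv> Tr p N q e"

lemma e_len: "k < q \<Longrightarrow> length (e k) = Suc N"
  using bij by (auto simp: bij_betw_def)

lemma Tr_in:
  fixes n :: "'a poly"
  assumes u: "0 \<le> u" "u < real q"
  defines "k' \<equiv> inv_into {0..<q} e (vadd (e (nat \<lfloor>u\<rfloor>)) (phi p N u n))"
  shows "k' < q" "e k' = vadd (e (nat \<lfloor>u\<rfloor>)) (phi p N u n)"
    "T n u = u + (real k' - of_int \<lfloor>u\<rfloor>)" "\<lfloor>T n u\<rfloor> = int k'"
    "0 \<le> T n u" "T n u < real q"
proof -
  have "nat \<lfloor>u\<rfloor> < q" using u by (simp add: nat_less_iff floor_less_iff)
  then have "length (e (nat \<lfloor>u\<rfloor>)) = Suc N" by (rule e_len)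
  then have inG: "vadd (e (nat \<lfloor>u\<rfloor>)) (phi p N u n) \<in> e ` {0..<q}"
    using bij by (simp add: bij_betw_def)
  show k'q: "k' < q" unfolding k'_def using inv_into_into[OF inG] by simp
  show "e k' = vadd (e (nat \<lfloor>u\<rfloor>)) (phi p N u n)" unfolding k'_def using f_inv_into_f[OF inG] .
  show Teq: "T n u = u + (real k' - of_int \<lfloor>u\<rfloor>)" unfolding Tr_def k'_def using u by simp
  have "T n u = (u - of_int \<lfloor>u\<rfloor>) + of_int (int k')" unfolding Teq by simp
  moreover have "0 \<le> u - of_int \<lfloor>u\<rfloor>" "u - of_int \<lfloor>u\<rfloor> < 1" by linarith+
  ultimately show fl: "\<lfloor>T n u\<rfloor> = int k'" by linarith
  show "0 \<le> T n u" using fl by linarith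
  show "T n u < real q" using fl k'q by linarith
qed

lemma Tr_out: "\<not> (0 \<le> u \<and> u < real q) \<Longrightarrow> T n u = u"
  unfolding Tr_def by auto

lemma vadd_zero: "length (x::'a list) = Suc N \<Longrightarrow> vadd x (replicate (Suc N) 0) = x"
  by (rule nth_equalityI) (simp_all add: nth_vadd del: replicate_Suc)

lemma Tr_zero: "T 0 u = u"
proof (cases "0 \<le> u \<and> u < real q")
  case True
  have k: "nat \<lfloor>u\<rfloor> < q" using True by (simp add: nat_less_iff floor_less_iff)
  have "inv_into {0..<q} e (e (nat \<lfloor>u\<rfloor>)) = nat \<lfloor>u\<rfloor>"
    using bij k by (intro inv_into_f_f) (auto simp: bij_betw_def)
  then show ?thesis using True e_len[OF k] unfolding Tr_def by (simp add: phi_zero vadd_zero del: replicate_Suc)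
qed (simp add: Tr_out)

lemma Tr_add: "T (m + n) u = T m (T n u)"
proof (cases "0 \<le> u \<and> u < real q")
  case True
  define k' where "k' = inv_into {0..<q} e (vadd (e (nat \<lfloor>u\<rfloor>)) (phi p N u n))"
  note t = Tr_in[OF conjunct1[OF True] conjunct2[OF True], of n, folded k'_def]
  have k: "nat \<lfloor>u\<rfloor> < q" using True by (simp add: nat_less_iff floor_less_iff)
  have "T n u = u + of_int (int k' - \<lfloor>u\<rfloor>)" using t(3) by simp
  then have ph: "phi p N (T n u) m = phi p N u m" by (simp only: phi_shift)
  have "T m (T n u) = T n u + (real (inv_into {0..<q} e (vadd (e k') (phi p N u m))) - real k')"
    using t(4,5,6) ph unfolding Tr_def by simp
  also have "\<dots> = u + (real (inv_into {0..<q} e (vadd (vadd (e (nat \<lfloor>u\<rfloor>)) (phi p N u n)) (phi p N u m))) - of_int \<lfloor>u\<rfloor>)"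
    using t(2,3) by simp
  also have "vadd (vadd (e (nat \<lfloor>u\<rfloor>)) (phi p N u n)) (phi p N u m) = vadd (e (nat \<lfloor>u\<rfloor>)) (phi p N u (m + n))"
    using e_len[OF k] by (intro nth_equalityI) (simp_all add: phi_add nth_vadd algebra_simps)
  finally show ?thesis using True unfolding Tr_def by simp
qed (simp add: Tr_out)

lemma Tr_int: "\<exists>z. T n u = u + of_int z"
proof (cases "0 \<le> u \<and> u < real q")
  case True
  then show ?thesis using Tr_in(3)[of u n] by (intro exI[of _ "int _ - \<lfloor>u\<rfloor>"]) simp
qed (auto simp: Tr_out intro: exI[of _ 0])

lemma range_iff_level:
  fixes L :: nat
  shows "(0 \<le> u \<and> u < real q) \<longleftrightarrow> (0 \<le> \<lfloor>real p ^ L * u\<rfloor> \<and> \<lfloor>real p ^ L * u\<rfloor> < int (p ^ L * q))"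
proof -
  have c: "real p ^ L > 0" using p1 by simp
  have "0 \<le> \<lfloor>real p ^ L * u\<rfloor> \<longleftrightarrow> 0 \<le> real p ^ L * u" by simp
  also have "\<dots> \<longleftrightarrow> 0 \<le> u" using mult_le_cancel_left_pos[OF c, of 0 u] by simp
  finally have "0 \<le> \<lfloor>real p ^ L * u\<rfloor> \<longleftrightarrow> 0 \<le> u" .
  moreover have "\<lfloor>real p ^ L * u\<rfloor> < int (p ^ L * q) \<longleftrightarrow> u < real q"
    using c by (simp add: floor_less_iff)
  ultimately show ?thesis by blast
qed

lemma deg_monom_mult: "Polynomial.degree (Polynomial.monom 1 k * (n::'a poly)) \<le> k + Polynomial.degree n"
  using degree_mult_le[of "Polynomial.monom 1 k" n] degree_monom_le[of "1::'a" k] by linarith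

lemma Tr_cong:
  fixes L :: nat
  assumes L: "Polynomial.degree n + Suc N \<le> L"
    and eq: "\<lfloor>real p ^ L * u\<rfloor> = \<lfloor>real p ^ L * u'\<rfloor>"
  shows "T n u - u = T n u' - u'"
proof (cases "0 \<le> u \<and> u < real q")
  case True
  then have True': "0 \<le> u' \<and> u' < real q" using range_iff_level[of u L] range_iff_level[of u' L] eq by simp
  have p0: "p > 0" using p1 by simp
  have fl: "\<lfloor>u\<rfloor> = \<lfloor>u'\<rfloor>" using floor_from_level[OF p0, of u L] floor_from_level[OF p0, of u' L] eq by simp
  have "phi p N u n = phi p N u' n"
    unfolding phi_def
  proof (intro map_cong refl ell_cong)
    fix j i assume j: "j \<in> set [0..<Suc N]" and i: "i \<le> Polynomial.degree (Polynomial.monom 1 (N - j) * n)"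
    have "i < L" using i deg_monom_mult[of "N - j" n] L by linarith
    then show "dig p i u = dig p i u'" using dig_level[OF p0, of i L] eq by simp
  qed
  then show ?thesis using True True' fl unfolding Tr_def by simp
next
  case False
  then have False': "\<not> (0 \<le> u' \<and> u' < real q)" using range_iff_level[of u L] range_iff_level[of u' L] eq by simp
  show ?thesis using False False' by (simp add: Tr_out)
qed


lemma pi_facts:
  fixes n :: "'a poly" and L :: nat
  assumes L: "Polynomial.degree n + Suc N \<le> L"
  defines "c \<equiv> real p ^ L"
  defines "\<pi> \<equiv> (\<lambda>m. \<lfloor>c * T n (of_int m / c)\<rfloor>)"
  shows "real_of_int (\<pi> m) / c = T n (of_int m / c)"
    and "T n u = u + of_int (\<pi> \<lfloor>c*u\<rfloor> - \<lfloor>c*u\<rfloor>) / c"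
proof -
  have c0: "c > 0" unfolding c_def using p1 by simp
  have cint: "c = of_int (int p ^ L)" unfolding c_def by simp
  have gen: "real_of_int (\<pi> m) / c = T n (of_int m / c)" for m
  proof -
    obtain z where z: "T n (of_int m / c) = of_int m / c + of_int z" using Tr_int by blast
    have "c * T n (of_int m / c) = of_int (m + int p ^ L * z)"
      unfolding z using c0 by (simp add: field_simps cint)
    then have "\<pi> m = m + int p ^ L * z" unfolding \<pi>_def by (metis floor_of_int)
    then show ?thesis unfolding z using c0 by (simp add: field_simps cint)
  qed
  show "real_of_int (\<pi> m) / c = T n (of_int m / c)" by (rule gen)
  define m where "m = \<lfloor>c*u\<rfloor>"
  have fl: "\<lfloor>c * (of_int m / c)\<rfloor> = m" using c0 by simp
  have "T n u - u = T n (of_int m / c) - of_int m / c"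
    by (rule Tr_cong[OF L]) (use fl in \<open>simp add: m_def c_def\<close>)
  also have "\<dots> = (of_int (\<pi> m) - of_int m) / c" using gen[of m] c0 by (simp add: diff_divide_distrib)
  finally show "T n u = u + of_int (\<pi> \<lfloor>c*u\<rfloor> - \<lfloor>c*u\<rfloor>) / c" unfolding m_def by simp
qed

lemma Tr_preserve_measurable:
  fixes n :: "'a poly"
  shows "T n \<in> borel_measurable borel"
    and "Y \<in> sets borel \<Longrightarrow> emeasure lborel ({u. T n u \<in> Y} \<inter> {0..<real q}) = emeasure lborel (Y \<inter> {0..<real q})"
proof -
  define L where "L = Polynomial.degree n + Suc N"
  define c where "c = real p ^ L"
  define \<pi> where "\<pi> = (\<lambda>m. \<lfloor>c * T n (of_int m / c)\<rfloor>)"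
  define \<pi>' where "\<pi>' = (\<lambda>m. \<lfloor>c * T (-n) (of_int m / c)\<rfloor>)"
  have L1: "Polynomial.degree n + Suc N \<le> L" and L2: "Polynomial.degree (-n) + Suc N \<le> L"
    unfolding L_def by simp_all
  have f1a: "real_of_int (\<pi> m) / c = T n (of_int m / c)" for m
    unfolding \<pi>_def c_def by (rule pi_facts(1)[OF L1])
  have f1b: "T n u = u + of_int (\<pi> \<lfloor>c*u\<rfloor> - \<lfloor>c*u\<rfloor>) / c" for u
    unfolding \<pi>_def c_def by (rule pi_facts(2)[OF L1])
  have c0: "c > 0" unfolding c_def using p1 by simp
  have rep: "T n = (\<lambda>u. u + of_int (\<pi> \<lfloor>c*u\<rfloor> - \<lfloor>c*u\<rfloor>) / c)" using f1b by (intro ext)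
  show "T n \<in> borel_measurable borel"
  proof -
    have g: "(\<lambda>u. \<lfloor>c*u\<rfloor>) \<in> borel \<rightarrow>\<^sub>M count_space UNIV" by measurable
    have "(\<lambda>u. (\<lambda>i u. u + of_int (\<pi> i - i) / c) \<lfloor>c*u\<rfloor> u) \<in> borel_measurable borel"
      by (rule measurable_compose_countable[OF _ g]) simp
    then show ?thesis unfolding rep by simp
  qed
  define W where "W = {0..<int (p ^ L * q)}"
  have Wr: "{0..<real q} = {u. \<lfloor>c*u\<rfloor> \<in> W}"
  proof (rule Set.set_eqI)
    fix u
    show "u \<in> {0..<real q} \<longleftrightarrow> u \<in> {u. \<lfloor>c*u\<rfloor> \<in> W}"
      using range_iff_level[of u L] unfolding W_def c_def by simp
  qed
  have inv: "\<pi>' (\<pi> m) = m" for m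
  proof -
    have "\<pi>' (\<pi> m) = \<lfloor>c * T (-n) (T n (of_int m / c))\<rfloor>" unfolding \<pi>'_def f1a ..
    also have "T (-n) (T n (of_int m / c)) = of_int m / c" using Tr_add[of "-n" n] Tr_zero by simp
    finally show ?thesis using c0 by simp
  qed
  have into: "\<pi> ` W \<subseteq> W"
  proof
    fix x assume "x \<in> \<pi> ` W"
    then obtain m where m: "m \<in> W" "x = \<pi> m" by auto
    have "of_int m / c \<in> {0..<real q}" using m(1) Wr c0 by simp
    then have "T n (of_int m / c) \<in> {0..<real q}" using Tr_in(5,6) by auto
    then have "\<lfloor>c * T n (of_int m / c)\<rfloor> \<in> W" using Wr by auto
    then show "x \<in> W" unfolding m(2) \<pi>_def .
  qed
  have injW: "inj_on \<pi> W" by (rule inj_on_inverseI[of _ \<pi>']) (rule inv)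
  have finW: "finite W" unfolding W_def by simp
  have bijW: "bij_betw \<pi> W W" unfolding bij_betw_def using endo_inj_surj[OF finW into injW] injW by simp
  assume Y: "Y \<in> sets borel"
  have "{u. T n u \<in> Y} \<inter> {0..<real q} = {u. \<lfloor>c*u\<rfloor> \<in> W \<and> u + of_int (\<pi> \<lfloor>c*u\<rfloor> - \<lfloor>c*u\<rfloor>) / c \<in> Y}"
    unfolding Wr using f1b by auto
  then show "emeasure lborel ({u. T n u \<in> Y} \<inter> {0..<real q}) = emeasure lborel (Y \<inter> {0..<real q})"
    using piecewise_translation[OF c0 finW bijW Y] Wr by (simp add: Int_commute)
qed
end




lemma int_digits_eq:
  fixes b :: int
  assumes b: "b > 1"
  shows "m \<ge> 0 \<Longrightarrow> m' \<ge> 0 \<Longrightarrow> m div b ^ K = m' div b ^ K \<Longrightarrow>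
    (\<forall>r<K. (m div b ^ r) mod b = (m' div b ^ r) mod b) \<Longrightarrow> m = m'"
proof (induction K arbitrary: m m')
  case 0
  then show ?case by simp
next
  case (Suc K)
  have d0: "m mod b = m' mod b" using Suc.prems(4) by (metis power_0 div_by_1 zero_less_Suc)
  have "m div b = m' div b"
  proof (rule Suc.IH)
    show "m div b \<ge> 0" "m' div b \<ge> 0" using Suc.prems b by (simp_all add: pos_imp_zdiv_nonneg_iff)
    have "m div b ^ Suc K = m div b div b ^ K" "m' div b ^ Suc K = m' div b div b ^ K"
      using b by (simp_all add: zdiv_zmult2_eq)
    then show "m div b div b ^ K = m' div b div b ^ K" using Suc.prems(3) by simp
    show "\<forall>r<K. (m div b div b ^ r) mod b = (m' div b div b ^ r) mod b"
    proof (intro allI impI)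
      fix r assume "r < K"
      then have "Suc r < Suc K" by simp
      then have "(m div b ^ Suc r) mod b = (m' div b ^ Suc r) mod b" using Suc.prems(4) by blast
      moreover have "m div b ^ Suc r = m div b div b ^ r" "m' div b ^ Suc r = m' div b div b ^ r"
        using b by (simp_all add: zdiv_zmult2_eq)
      ultimately show "(m div b div b ^ r) mod b = (m' div b div b ^ r) mod b" by simp
    qed
  qed
  then show ?case using d0 by (metis div_mult_mod_eq)
qed

lemma of_int_mod_ring_inj:
  assumes "0 \<le> a" "a < int CARD('p)" "0 \<le> b" "b < int CARD('p)"
    and "(of_int a :: 'p::nontriv mod_ring) = of_int b"
  shows "a = b"
proof -
  have "to_int_mod_ring (of_int a :: 'p mod_ring) = to_int_mod_ring (of_int b :: 'p mod_ring)"
    using assms(5) by simp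
  then show ?thesis using assms(1-4) unfolding of_int_of_int_mod_ring by simp
qed

lemma fiber_inj:
  fixes n :: "'p::prime_card mod_ring poly" and N :: nat
  assumes n: "n \<noteq> 0"
  defines "d \<equiv> Polynomial.degree n"
  defines "P \<equiv> int CARD('p)"
  defines "dgm \<equiv> (\<lambda>i m. (m div P ^ (d + N - 1 - i)) mod P)"
  defines "cnd \<equiv> (\<lambda>m. \<forall>j<N. (\<Sum>i<j+d+1. Polynomial.coeff (Polynomial.monom 1 j * n) i * of_int (dgm i m)) = (0::'p mod_ring))"
  shows "inj_on (\<lambda>m. m div P ^ N) {m. 0 \<le> m \<and> cnd m}"
proof (rule inj_onI)
  fix m m' assume m: "m \<in> {m. 0 \<le> m \<and> cnd m}" and m': "m' \<in> {m. 0 \<le> m \<and> cnd m}"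
    and eq: "m div P ^ N = m' div P ^ N"
  have P1: "P > 1" unfolding P_def using nontriv[where 'a='p] by simp
  have dig: "\<forall>i'<i. dgm i' m = dgm i' m'" if "i \<le> d + N" for i
    using that
  proof (induction i)
    case 0
    then show ?case by simp
  next
    case (Suc i)
    have IH: "\<forall>i'<i. dgm i' m = dgm i' m'" using Suc by simp
    have "dgm i m = dgm i m'"
    proof (cases "i < d")
      case True
      have e1: "d + N - 1 - i = N + (d + N - 1 - i - N)" using True by simp
      have "m div P ^ (d + N - 1 - i) = m div P ^ N div P ^ (d + N - 1 - i - N)"
           "m' div P ^ (d + N - 1 - i) = m' div P ^ N div P ^ (d + N - 1 - i - N)"
        using P1 by (subst e1, simp add: power_add zdiv_zmult2_eq)+
      then show ?thesis unfolding dgm_def using eq by simp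
    next
      case False
      define j where "j = i - d"
      have j: "j < N" "i = j + d" using False Suc.prems unfolding j_def by auto
      define c where "c = (\<lambda>i. Polynomial.coeff (Polynomial.monom 1 j * n) i)"
      have ci: "c i = Polynomial.coeff n d" unfolding c_def j(2) by (simp add: coeff_monom_mult)
      have cnz: "c i \<noteq> 0" unfolding ci d_def using n by simp
      have s: "c i * of_int (dgm i x) = - (\<Sum>i'<i. c i' * of_int (dgm i' x))" if "cnd x" for x
      proof -
        have "(\<Sum>i'<Suc i. c i' * of_int (dgm i' x)) = 0" using that j unfolding cnd_def c_def by simp
        then show ?thesis by (simp add: eq_neg_iff_add_eq_0 add.commute)
      qed
      have "(\<Sum>i'<i. c i' * of_int (dgm i' m)) = (\<Sum>i'<i. c i' * of_int (dgm i' m'))"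
        using IH by simp
      then have "c i * of_int (dgm i m) = c i * (of_int (dgm i m') :: 'p mod_ring)"
        using s[of m] s[of m'] m m' by simp
      then have "(of_int (dgm i m) :: 'p mod_ring) = of_int (dgm i m')" using cnz by simp
      then show ?thesis
        by (rule of_int_mod_ring_inj[rotated 4]) (use P1 in \<open>simp_all add: dgm_def P_def\<close>)
    qed
    then show ?case using IH less_Suc_eq by auto
  qed
  show "m = m'"
  proof (rule int_digits_eq[OF P1, of m m' N])
    show "0 \<le> m" "0 \<le> m'" using m m' by auto
    show "m div P ^ N = m' div P ^ N" by (rule eq)
    show "\<forall>r<N. (m div P ^ r) mod P = (m' div P ^ r) mod P"
    proof (intro allI impI)
      fix r assume r: "r < N"
      have "dgm (d + N - 1 - r) m = dgm (d + N - 1 - r) m'"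
        using dig[of "d + N"] r by simp
      moreover have "d + N - 1 - (d + N - 1 - r) = r" using r by simp
      ultimately show "(m div P ^ r) mod P = (m' div P ^ r) mod P" unfolding dgm_def by simp
    qed
  qed
qed


lemma monom_x_mult: "Polynomial.monom (1::'a::comm_ring_1) k * ([:0, 1:] * n) = Polynomial.monom 1 (Suc k) * n"
proof -
  have "[:0, 1:] = Polynomial.monom (1::'a) 1" by (simp add: monom_Suc)
  then show ?thesis by (simp add: mult.assoc[symmetric] mult_monom)
qed

lemma vadd_Cons: "vadd (a # as) (b # bs) = (a + b) # vadd as bs"
  unfolding vadd_def by simp

lemma pattern_forces_zero:
  fixes e :: "nat \<Rightarrow> 'p::prime_card mod_ring list" and B :: "'p mod_ring list set" and n :: "'p mod_ring poly"
  assumes S: "sys p N q e" and pf: "pattern_free N B" and Blen: "\<forall>v\<in>B. length v = N"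
  assumes u: "0 \<le> u" "u < real q"
   and h0: "e (nat \<lfloor>u\<rfloor>) \<in> {xs. length xs = Suc N \<and> hd xs = 0 \<and> tl xs \<in> B}"
   and h1: "e (nat \<lfloor>Tr p N q e n u\<rfloor>) \<in> {xs. length xs = Suc N \<and> hd xs = 0 \<and> tl xs \<in> B}"
   and h2: "e (nat \<lfloor>Tr p N q e ([:0,1:] * n) u\<rfloor>) \<in> {xs. length xs = Suc N \<and> hd xs = 0 \<and> tl xs \<in> B}"
  shows "\<forall>j<N. ell p u (Polynomial.monom 1 j * n) = 0"
proof (cases "N = 0")
  case True
  then show ?thesis by simp
next
  case False
  interpret sys p N q e by (rule S)
  define x where "x = e (nat \<lfloor>u\<rfloor>)"
  define y where "y = tl x"
  have x: "x = 0 # y" using h0 unfolding x_def y_def by (cases "e (nat \<lfloor>u\<rfloor>)") auto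
  have yB: "y \<in> B" using h0 unfolding x_def y_def by auto
  have ylen: "length y = N" using yB Blen by auto
  define a where "a = ell p u (Polynomial.monom 1 N * n)"
  define b where "b = ell p u (Polynomial.monom 1 (Suc N) * n)"
  define v where "v = map (\<lambda>j. ell p u (Polynomial.monom 1 (N - 1 - j) * n)) [0..<N]"
  have vlen: "length v = N" unfolding v_def by simp
  have phi1: "phi p N u n = a # v"
    unfolding phi_def a_def v_def
    by (rule nth_equalityI) (auto simp: nth_Cons' simp del: upt_Suc)
  have e1: "e (nat \<lfloor>Tr p N q e n u\<rfloor>) = (0 + a) # vadd y v"
    using Tr_in(2,4)[OF u, of n] unfolding phi1 x_def[symmetric] x by (simp add: vadd_Cons)
  have a0: "a = 0" and vB: "vadd y v \<in> B" using h1 unfolding e1 by auto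
  have phi2: "phi p N u ([:0,1:] * n) = b # (a # butlast v)"
    unfolding phi_def a_def b_def v_def monom_x_mult
  proof (rule nth_equalityI)
    show "length (map (\<lambda>j. ell p u (Polynomial.monom 1 (Suc (N - j)) * n)) [0..<Suc N]) =
      length (ell p u (Polynomial.monom 1 (Suc N) * n) # ell p u (Polynomial.monom 1 N * n) #
        butlast (map (\<lambda>j. ell p u (Polynomial.monom 1 (N - 1 - j) * n)) [0..<N]))"
      using False by simp
    fix i assume "i < length (map (\<lambda>j. ell p u (Polynomial.monom 1 (Suc (N - j)) * n)) [0..<Suc N])"
    then have i: "i < Suc N" by simp
    show "map (\<lambda>j. ell p u (Polynomial.monom 1 (Suc (N - j)) * n)) [0..<Suc N] ! i =
      (ell p u (Polynomial.monom 1 (Suc N) * n) # ell p u (Polynomial.monom 1 N * n) #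
        butlast (map (\<lambda>j. ell p u (Polynomial.monom 1 (N - 1 - j) * n)) [0..<N])) ! i"
    proof (cases i)
      case 0
      then show ?thesis by (simp del: upt_Suc)
    next
      case (Suc i1)
      show ?thesis
      proof (cases i1)
        case 0
        then show ?thesis using Suc False by (simp del: upt_Suc)
      next
        case (Suc i2)
        have i2: "i2 < N - 1" using i \<open>i = Suc i1\<close> Suc by simp
        then have "[0..<Suc N] ! Suc (Suc i2) = Suc (Suc i2)" "[0..<N] ! i2 = i2" by (simp_all del: upt_Suc)
        moreover have "Suc (N - Suc (Suc i2)) = N - Suc i2" using i2 by simp
        ultimately show ?thesis using \<open>i = Suc i1\<close> Suc False i2
          by (simp add: nth_butlast del: upt_Suc)
      qed
    qed
  qed
  have sv: "shiftv v = a # butlast v" unfolding shiftv_def using a0 False vlen by auto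
  have e2: "e (nat \<lfloor>Tr p N q e ([:0,1:] * n) u\<rfloor>) = (0 + b) # vadd y (shiftv v)"
    using Tr_in(2,4)[OF u, of "[:0,1:] * n"] unfolding phi2 x_def[symmetric] x sv by (simp add: vadd_Cons)
  have v2B: "vadd y (shiftv v) \<in> B" using h2 unfolding e2 by auto
  have "v = replicate N 0" using pf yB vB v2B ylen vlen unfolding pattern_free_def by blast
  then have vz: "\<forall>j<N. v ! j = 0" by simp
  show ?thesis
  proof (intro allI impI)
    fix j assume j: "j < N"
    have "v ! (N - 1 - j) = ell p u (Polynomial.monom 1 (N - 1 - (N - 1 - j)) * n)"
      unfolding v_def using j by simp
    moreover have "N - 1 - (N - 1 - j) = j" using j by simp
    ultimately show "ell p u (Polynomial.monom 1 j * n) = 0" using vz j by simp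
  qed
qed


lemma div_eq_bounds:
  fixes a b k :: int
  assumes "b > 0" "a div b = k"
  shows "k * b \<le> a \<and> a < (k + 1) * b"
proof -
  have "a = b * (a div b) + a mod b" by simp
  moreover have "0 \<le> a mod b" "a mod b < b" using assms by simp_all
  ultimately show ?thesis using assms(2) by (simp add: algebra_simps)
qed

lemma bad_cover:
  fixes n :: "'p::prime_card mod_ring poly" and N :: nat and K :: "int set"
  assumes n: "n \<noteq> 0" and K: "finite K"
  defines "p \<equiv> CARD('p)"
  defines "d \<equiv> Polynomial.degree n"
  shows "\<exists>S'. finite S' \<and> card S' \<le> card K * p ^ d \<and>
    {u. 0 \<le> u \<and> \<lfloor>u\<rfloor> \<in> K \<and> (\<forall>j<N. ell p u (Polynomial.monom 1 j * n) = 0)}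
      \<subseteq> {u. \<lfloor>real p ^ (d + N) * u\<rfloor> \<in> S'}"
proof -
  define P where "P = int p"
  define L where "L = d + N"
  define dgm where "dgm = (\<lambda>i m. (m div P ^ (d + N - 1 - i)) mod P)"
  define cnd where "cnd = (\<lambda>m. \<forall>j<N. (\<Sum>i<j+d+1. Polynomial.coeff (Polynomial.monom 1 j * n) i * of_int (dgm i m)) = (0::'p mod_ring))"
  have inj: "inj_on (\<lambda>m. m div P ^ N) {m. 0 \<le> m \<and> cnd m}"
    using fiber_inj[OF n, of N] unfolding cnd_def dgm_def P_def p_def d_def by simp
  have p1: "p > 1" unfolding p_def using nontriv[where 'a='p] by simp
  have P0: "P > 0" unfolding P_def using p1 by simp
  define S where "S = (\<lambda>k. {m. m div P ^ L = k \<and> 0 \<le> m \<and> cnd m})"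
  define S' where "S' = (\<Union>k\<in>K. S k)"
  have Sk: "finite (S k) \<and> card (S k) \<le> p ^ d" for k
  proof -
    have injk: "inj_on (\<lambda>m. m div P ^ N) (S k)"
      by (rule inj_on_subset[OF inj]) (auto simp: S_def)
    have img: "(\<lambda>m. m div P ^ N) ` S k \<subseteq> {k * P ^ d ..< (k + 1) * P ^ d}"
    proof
      fix z assume "z \<in> (\<lambda>m. m div P ^ N) ` S k"
      then obtain m where m: "m \<in> S k" "z = m div P ^ N" by auto
      have "m div P ^ N div P ^ d = m div P ^ L"
        unfolding L_def using P0 by (simp add: zdiv_zmult2_eq power_add mult.commute)
      then have "z div P ^ d = k" using m unfolding S_def by simp
      then show "z \<in> {k * P ^ d ..< (k + 1) * P ^ d}" using div_eq_bounds[of "P ^ d" z k] P0 by simp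
    qed
    have fin: "finite (S k)"
      using finite_subset[OF img] injk by (metis finite_atLeastLessThan_int finite_imageD)
    have "card (S k) = card ((\<lambda>m. m div P ^ N) ` S k)" using card_image[OF injk] by simp
    also have "\<dots> \<le> card {k * P ^ d ..< (k + 1) * P ^ d}" by (rule card_mono[OF _ img]) simp
    also have "\<dots> = p ^ d" unfolding P_def by (simp add: algebra_simps flip: of_nat_power)
    finally show ?thesis using fin by simp
  qed
  have finS': "finite S'" unfolding S'_def using K Sk by auto
  have "card S' \<le> (\<Sum>k\<in>K. card (S k))" unfolding S'_def by (rule card_UN_le[OF K])
  also have "\<dots> \<le> (\<Sum>k\<in>K. p ^ d)" using Sk by (intro sum_mono) auto
  also have "\<dots> = card K * p ^ d" by simp
  finally have cardS': "card S' \<le> card K * p ^ d" .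
  have sub: "{u. 0 \<le> u \<and> \<lfloor>u\<rfloor> \<in> K \<and> (\<forall>j<N. ell p u (Polynomial.monom 1 j * n) = 0)}
      \<subseteq> {u. \<lfloor>real p ^ (d + N) * u\<rfloor> \<in> S'}"
  proof safe
    fix u assume u0: "0 \<le> u" and uK: "\<lfloor>u\<rfloor> \<in> K" and ell0: "\<forall>j<N. ell p u (Polynomial.monom 1 j * n) = 0"
    define m where "m = \<lfloor>real p ^ L * u\<rfloor>"
    have m0: "0 \<le> m" unfolding m_def using u0 by simp
    have mk: "m div P ^ L = \<lfloor>u\<rfloor>" unfolding m_def P_def using floor_from_level[of p u L] p1 by simp
    have "cnd m" unfolding cnd_def
    proof (intro allI impI)
      fix j assume j: "j < N"
      have dg: "Polynomial.degree (Polynomial.monom 1 j * n) < j + d + 1"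
        using degree_mult_le[of "Polynomial.monom 1 j" n] degree_monom_le[of "1::'p mod_ring" j] unfolding d_def by linarith
      have "ell p u (Polynomial.monom 1 j * n) = (\<Sum>i<j+d+1. Polynomial.coeff (Polynomial.monom 1 j * n) i * of_int (dig p i u))"
        by (rule ell_sum[OF dg])
      also have "\<dots> = (\<Sum>i<j+d+1. Polynomial.coeff (Polynomial.monom 1 j * n) i * of_int (dgm i m))"
      proof (intro sum.cong refl)
        fix i assume "i \<in> {..<j+d+1}"
        then have iL: "i < L" unfolding L_def using j by simp
        show "Polynomial.coeff (Polynomial.monom 1 j * n) i * of_int (dig p i u) =
              Polynomial.coeff (Polynomial.monom 1 j * n) i * of_int (dgm i m)"
          using dig_level[of p i L u] iL p1 unfolding dgm_def m_def P_def L_def by simp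
      qed
      finally show "(\<Sum>i<j+d+1. Polynomial.coeff (Polynomial.monom 1 j * n) i * of_int (dgm i m)) = 0"
        using ell0 j by simp
    qed
    then have "m \<in> S \<lfloor>u\<rfloor>" unfolding S_def using mk m0 by simp
    then show "\<lfloor>real p ^ (d + N) * u\<rfloor> \<in> S'" unfolding S'_def m_def L_def using uK by auto
  qed
  show ?thesis using finS' cardS' sub by blast
qed




lemma final_arith:
  fixes p b :: real and N :: nat
  assumes p: "p > 1" and b: "b > 0"
  shows "b / (p ^ N * p ^ Suc N) \<le> (p powr (real N / 2 + 1) / b)^2 * (b / p ^ Suc N) ^ 3"
proof -
  have "(p powr (real N / 2 + 1))^2 = p powr (real N / 2 + 1) * p powr (real N / 2 + 1)"
    by (simp add: power2_eq_square)
  also have "\<dots> = p powr (real (N + 2))" by (simp add: powr_add[symmetric] add.commute)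
  also have "\<dots> = p ^ (N + 2)" using p by (intro powr_realpow) simp
  finally have e: "(p powr (real N / 2 + 1))^2 = p ^ (N + 2)" .
  have "(p powr (real N / 2 + 1) / b)^2 * (b / p ^ Suc N) ^ 3
      = (p powr (real N / 2 + 1))^2 / b^2 * (b^3 / (p ^ Suc N)^3)" by (simp add: power_divide)
  also have "\<dots> = p ^ (N+2) / b^2 * (b^3 / (p ^ Suc N)^3)" by (simp only: e)
  also have "\<dots> = b / (p ^ N * p ^ Suc N)"
    using p b by (simp add: field_simps power_add power3_eq_cube power2_eq_square)
  finally show ?thesis by simp
qed

lemma final_strict:
  fixes x b :: real and y :: real
  assumes "0 < x" "x < b" "y > 0"
  shows "(x / b)^2 * y < y"
proof -
  have "0 < x / b" "x / b < 1" using assms by auto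
  then have "(x / b)^2 < 1" by (simp add: power_less_one_iff abs_less_iff)
  then show ?thesis using assms(3) by simp
qed


theorem proposition11p9:
  fixes N :: nat
    and B :: "('p::prime_card mod_ring) list set"
  assumes "\<forall>v \<in> B. length v = N"
    and "real (card B) > real CARD('p) powr (real N / 2 + 1)"
    and "pattern_free N B"
  shows "\<exists>(M :: (nat \<Rightarrow> real) measure) (T :: 'p mod_ring poly \<Rightarrow> (nat \<Rightarrow> real) \<Rightarrow> (nat \<Rightarrow> real)) A.
           mps M T \<and> A \<in> sets M \<and> measure M A > 0 \<and>
           (\<forall>n. n \<noteq> 0 \<longrightarrow>
              measure M (A \<inter> (T n -` A \<inter> space M) \<inter> (T ([:0, 1:] * n) -` A \<inter> space M))
                \<le> (real CARD('p) powr (real N / 2 + 1) / real (card B)) ^ 2 * measure M A ^ 3)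
           \<and> (real CARD('p) powr (real N / 2 + 1) / real (card B)) ^ 2 * measure M A ^ 3 < measure M A ^ 3"
proof -
  note Blen = assms(1) and Bbig = assms(2) and pf = assms(3)
  define p where "p = CARD('p)"
  have p1: "p > 1" unfolding p_def using nontriv[where 'a='p] by simp
  define G where "G = {xs :: 'p mod_ring list. length xs = Suc N}"
  have G': "G = {xs. set xs \<subseteq> UNIV \<and> length xs = Suc N}" unfolding G_def by simp
  have finG: "finite G" unfolding G' by (rule finite_lists_length_eq) simp
  have cardG: "card G = p ^ Suc N" unfolding G' p_def
    by (subst card_lists_length_eq) simp_all
  define q where "q = card G"
  obtain e where e: "bij_betw e {0..<q} G" using ex_bij_betw_nat_finite[OF finG] unfolding q_def by blast
  have S: "sys p N q e" by (rule sys.intro) (use p1 e in \<open>simp_all add: G_def\<close>)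
  interpret sys p N q e by (rule S)
  have q0: "q > 0" unfolding q_def cardG using p1 by simp
  have qreal: "real q = real p ^ Suc N" unfolding q_def cardG by simp
  define D where "D = {xs. length xs = Suc N \<and> hd xs = (0::'p mod_ring) \<and> tl xs \<in> B}"
  have finB: "finite B"
  proof (rule finite_subset)
    show "B \<subseteq> {xs. set xs \<subseteq> UNIV \<and> length xs = N}" using Blen by auto
  qed (rule finite_lists_length_eq, simp)
  have bijD: "bij_betw (\<lambda>y. 0 # y) B D"
  proof (rule bij_betw_byWitness[of _ tl])
    show "\<forall>a\<in>B. tl (0 # a) = a" by simp
    show "\<forall>a'\<in>D. 0 # tl a' = a'"
    proof
      fix x assume x: "x \<in> D"
      then have "x \<noteq> []" "hd x = 0" unfolding D_def by auto
      then show "0 # tl x = x" by (metis list.collapse)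
    qed
    show "(\<lambda>y. 0 # y) ` B \<subseteq> D" unfolding D_def using Blen by auto
    show "tl ` D \<subseteq> B" unfolding D_def by auto
  qed
  have cardD: "card D = card B" using bij_betw_same_card[OF bijD] by simp
  define Kn where "Kn = {k \<in> {0..<q}. e k \<in> D}"
  have DG: "D \<subseteq> G" unfolding D_def G_def by auto
  have eKn: "e ` Kn = D"
  proof
    show "e ` Kn \<subseteq> D" unfolding Kn_def by auto
    show "D \<subseteq> e ` Kn"
    proof
      fix x assume x: "x \<in> D"
      then have "x \<in> e ` {0..<q}" using DG e by (auto simp: bij_betw_def)
      then obtain k where "k \<in> {0..<q}" "x = e k" by auto
      then show "x \<in> e ` Kn" using x unfolding Kn_def by auto
    qed
  qed
  have bijKn: "bij_betw e Kn D"
    by (rule bij_betw_subset[OF e _ eKn]) (auto simp: Kn_def)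
  have cardKn: "card Kn = card B" using bij_betw_same_card[OF bijKn] cardD by simp
  define K where "K = int ` Kn"
  have finK: "finite K" unfolding K_def Kn_def by simp
  have cardK: "card K = card B" unfolding K_def using cardKn by (simp add: card_image)
  define Ar where "Ar = {u::real. \<lfloor>1 * u\<rfloor> \<in> K}"
  have Ar_iff: "u \<in> Ar \<longleftrightarrow> 0 \<le> u \<and> u < real q \<and> e (nat \<lfloor>u\<rfloor>) \<in> D" for u
  proof
    assume "u \<in> Ar"
    then obtain k where k: "k \<in> Kn" "\<lfloor>u\<rfloor> = int k" unfolding Ar_def K_def by auto
    then have "k < q" "e k \<in> D" unfolding Kn_def by auto
    note kk = this
    have nk: "nat \<lfloor>u\<rfloor> = k" using k(2) by simp
    have "real k \<le> u" "u < real k + 1" using k(2) by (simp_all add: floor_eq_iff)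
    then have "0 \<le> u" "u < real q" using kk(1) by linarith+
    then show "0 \<le> u \<and> u < real q \<and> e (nat \<lfloor>u\<rfloor>) \<in> D" using nk kk(2) by simp
  next
    assume h: "0 \<le> u \<and> u < real q \<and> e (nat \<lfloor>u\<rfloor>) \<in> D"
    then have "nat \<lfloor>u\<rfloor> \<in> Kn" unfolding Kn_def by (auto simp: nat_less_iff floor_less_iff)
    moreover have "\<lfloor>u\<rfloor> = int (nat \<lfloor>u\<rfloor>)" using h by simp
    ultimately have "\<lfloor>u\<rfloor> \<in> int ` Kn" by (metis image_eqI)
    then show "u \<in> Ar" unfolding Ar_def K_def by simp
  qed
  have Ar_sets: "Ar \<in> sets borel" unfolding Ar_def by (rule floor_set_sets)
  have Ar_meas: "emeasure lborel Ar = ennreal (real (card B))"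
    unfolding Ar_def floor_set_measure[OF zero_less_one finK] cardK by simp
  have Ar_sub: "Ar \<subseteq> {0..<real q}"
  proof
    fix u assume "u \<in> Ar"
    then show "u \<in> {0..<real q}" using Ar_iff[of u] by simp
  qed
  define Lq where "Lq = uniform_measure lborel {0..<real q}"
  have Iq: "emeasure lborel {0..<real q} = ennreal (real q)" by simp
  have Lq_prob: "prob_space Lq" unfolding Lq_def
    by (rule prob_space_uniform_measure) (use q0 Iq in simp_all)
  have sets_Lq: "sets Lq = sets borel" unfolding Lq_def by simp
  have space_Lq: "space Lq = UNIV" unfolding Lq_def by simp
  have Lq_em: "emeasure Lq Y = emeasure lborel ({0..<real q} \<inter> Y) / ennreal (real q)" if "Y \<in> sets borel" for Y
    unfolding Lq_def using that Iq by (subst emeasure_uniform_measure) simp_all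
  define F where "F = (\<lambda>(u::real) (i::nat). if i = 0 then u else 0)"
  define PB where "PB = PiM (UNIV::nat set) (\<lambda>_. (borel :: real measure))"
  have space_PB: "space PB = UNIV" unfolding PB_def by (simp add: space_PiM)
  have F_meas: "F \<in> Lq \<rightarrow>\<^sub>M PB"
    unfolding F_def PB_def
    by (rule measurable_PiM_single') (auto simp: measurable_cong_sets[OF sets_Lq refl])
  define M where "M = distr Lq PB F"
  have sets_M: "sets M = sets PB" unfolding M_def by simp
  have space_M: "space M = UNIV" unfolding M_def by (simp add: space_PB)
  have M_prob: "prob_space M" unfolding M_def by (rule prob_space.prob_space_distr[OF Lq_prob F_meas])
  have FX: "F -` X \<in> sets borel" if "X \<in> sets PB" for X
    using measurable_sets[OF F_meas that] space_Lq sets_Lq by simp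
  have emM: "emeasure M X = emeasure Lq (F -` X)" if "X \<in> sets PB" for X
    unfolding M_def using that F_meas space_Lq by (subst emeasure_distr) simp_all
  define T where "T = (\<lambda>n (\<omega>::nat \<Rightarrow> real) i. if i = 0 then Tr p N q e n (\<omega> 0) else \<omega> i)"
  have T_PB: "T n \<in> PB \<rightarrow>\<^sub>M PB" for n
  proof -
    have c0: "(\<lambda>\<omega>::nat\<Rightarrow>real. Tr p N q e n (\<omega> 0)) \<in> PB \<rightarrow>\<^sub>M borel"
      unfolding PB_def
      by (rule measurable_compose[OF measurable_component_singleton[of 0 UNIV "\<lambda>_. borel"] Tr_preserve_measurable(1)]) simp
    have ci: "(\<lambda>\<omega>::nat\<Rightarrow>real. \<omega> i) \<in> PB \<rightarrow>\<^sub>M borel" for i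
      unfolding PB_def by (rule measurable_component_singleton) simp
    show ?thesis using c0 ci unfolding T_def PB_def
      by (intro measurable_PiM_single') (auto simp: space_PiM)
  qed
  have FT: "F -` (T n -` X) = {u. Tr p N q e n u \<in> F -` X}" for n X
  proof -
    have "T n (F u) = F (Tr p N q e n u)" for u unfolding T_def F_def by auto
    then show ?thesis by auto
  qed
  have mpsMT: "mps M T"
    unfolding mps_def
  proof (intro conjI allI ballI)
    show "prob_space M" by (rule M_prob)
    fix n :: "'p mod_ring poly"
    show "mp_map M (T n)"
      unfolding mp_map_def
    proof (intro conjI ballI)
      show TM: "T n \<in> M \<rightarrow>\<^sub>M M" using T_PB[of n] by (simp add: measurable_cong_sets[OF sets_M sets_M])
      fix X assume X: "X \<in> sets M"
      then have XPB: "X \<in> sets PB" using sets_M by simp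
      have TX: "T n -` X \<in> sets PB" using measurable_sets[OF T_PB XPB] space_PB by simp
      define Y where "Y = F -` X"
      have Y: "Y \<in> sets borel" unfolding Y_def by (rule FX[OF XPB])
      have TY: "{u. Tr p N q e n u \<in> Y} \<in> sets borel"
        using measurable_sets[OF Tr_preserve_measurable(1) Y] by (simp add: vimage_def)
      have "emeasure M (T n -` X \<inter> space M) = emeasure Lq {u. Tr p N q e n u \<in> Y}"
        using emM[OF TX] FT unfolding space_M Y_def by simp
      also have "\<dots> = emeasure lborel ({0..<real q} \<inter> {u. Tr p N q e n u \<in> Y}) / ennreal (real q)"
        by (rule Lq_em[OF TY])
      also have "{0..<real q} \<inter> {u. Tr p N q e n u \<in> Y} = {u. Tr p N q e n u \<in> Y} \<inter> {0..<real q}" by auto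
      also have "emeasure lborel \<dots> = emeasure lborel (Y \<inter> {0..<real q})"
        by (rule Tr_preserve_measurable(2)[OF Y])
      also have "Y \<inter> {0..<real q} = {0..<real q} \<inter> Y" by auto
      also have "emeasure lborel \<dots> / ennreal (real q) = emeasure Lq Y" by (rule Lq_em[OF Y, symmetric])
      also have "\<dots> = emeasure M X" unfolding Y_def using emM[OF XPB] by simp
      finally show "emeasure M (T n -` X \<inter> space M) = emeasure M X" .
    qed
  next
    fix x :: "nat \<Rightarrow> real"
    show "T 0 x = x" unfolding T_def by (rule ext) (simp add: Tr_zero)
  next
    fix m n :: "'p mod_ring poly" and x :: "nat \<Rightarrow> real"
    show "T (m + n) x = T m (T n x)" unfolding T_def by (rule ext) (simp add: Tr_add)
  qed
  define A where "A = {\<omega>::nat \<Rightarrow> real. \<omega> 0 \<in> Ar}"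
  have A_PB: "A \<in> sets PB"
  proof -
    have "(\<lambda>\<omega>::nat\<Rightarrow>real. \<omega> 0) \<in> PB \<rightarrow>\<^sub>M borel"
      unfolding PB_def by (rule measurable_component_singleton) simp
    from measurable_sets[OF this Ar_sets] show ?thesis unfolding A_def space_PB by (simp add: vimage_def)
  qed
  have A_M: "A \<in> sets M" using A_PB sets_M by simp
  have FA: "F -` A = Ar" unfolding A_def F_def by auto
  have finM: "finite_measure M" using M_prob by (simp add: prob_space_def)
  have mA_em: "emeasure M A = ennreal (real (card B) / real q)"
  proof -
    have "emeasure M A = emeasure Lq Ar" using emM[OF A_PB] FA by simp
    also have "\<dots> = emeasure lborel Ar / ennreal (real q)"
      using Lq_em[OF Ar_sets] Ar_sub by (simp add: Int_absorb1)
    also have "\<dots> = ennreal (real (card B) / real q)" using Ar_meas q0 by (simp add: divide_ennreal)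
    finally show ?thesis .
  qed
  have mA: "measure M A = real (card B) / real q"
    using mA_em finite_measure.emeasure_eq_measure[OF finM, of A] by simp
  have Bpos: "real (card B) > 0"
  proof -
    have "0 < real CARD('p) powr (real N / 2 + 1)" using p1 unfolding p_def by simp
    then show ?thesis using Bbig by linarith
  qed
  have mA_pos: "measure M A > 0" unfolding mA using Bpos q0 by simp
  have triple: "measure M (A \<inter> (T n -` A \<inter> space M) \<inter> (T ([:0, 1:] * n) -` A \<inter> space M))
                \<le> (real CARD('p) powr (real N / 2 + 1) / real (card B)) ^ 2 * measure M A ^ 3"
    if n: "n \<noteq> 0" for n
  proof -
    define d where "d = Polynomial.degree n"
    define c where "c = real p ^ (d + N)"
    have c0: "c > 0" unfolding c_def using p1 by simp
    obtain S' where S': "finite S'" "card S' \<le> card K * p ^ d"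
      "{u. 0 \<le> u \<and> \<lfloor>u\<rfloor> \<in> K \<and> (\<forall>j<N. ell p u (Polynomial.monom 1 j * n) = 0)}
        \<subseteq> {u. \<lfloor>c * u\<rfloor> \<in> S'}"
      using bad_cover[OF n finK, of N] unfolding p_def[symmetric] d_def[symmetric] c_def by blast
    define S3 where "S3 = A \<inter> (T n -` A \<inter> space M) \<inter> (T ([:0, 1:] * n) -` A \<inter> space M)"
    have S3_PB: "S3 \<in> sets PB" unfolding S3_def space_M
      using A_PB measurable_sets[OF T_PB A_PB] measurable_sets[OF T_PB A_PB] space_PB by auto
    have FS3: "F -` S3 = {u. u \<in> Ar \<and> Tr p N q e n u \<in> Ar \<and> Tr p N q e ([:0, 1:] * n) u \<in> Ar}"
      unfolding S3_def space_M using FT[of n A] FT[of "[:0, 1:] * n" A] FA by auto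
    have sub: "F -` S3 \<subseteq> {u. \<lfloor>c * u\<rfloor> \<in> S'}"
    proof
      fix u assume "u \<in> F -` S3"
      then have h: "u \<in> Ar" "Tr p N q e n u \<in> Ar" "Tr p N q e ([:0, 1:] * n) u \<in> Ar" unfolding FS3 by auto
      have u: "0 \<le> u" "u < real q" "e (nat \<lfloor>u\<rfloor>) \<in> D" using h(1) Ar_iff[of u] by simp_all
      have "\<forall>j<N. ell p u (Polynomial.monom 1 j * n) = 0"
        by (rule pattern_forces_zero[OF S pf Blen u(1,2)]) (use u(3) Ar_iff[of "Tr p N q e n u"] Ar_iff[of "Tr p N q e ([:0,1:] * n) u"] h(2,3) in \<open>simp_all add: D_def\<close>)
      moreover have "\<lfloor>u\<rfloor> \<in> K" using h(1) unfolding Ar_def by simp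
      ultimately show "u \<in> {u. \<lfloor>c * u\<rfloor> \<in> S'}" using S'(3) u(1) by blast
    qed
    have S'sets: "{u. \<lfloor>c * u\<rfloor> \<in> S'} \<in> sets borel" by (rule floor_set_sets)
    have "emeasure M S3 = emeasure Lq (F -` S3)" by (rule emM[OF S3_PB])
    also have "\<dots> \<le> emeasure Lq {u. \<lfloor>c * u\<rfloor> \<in> S'}"
      by (rule emeasure_mono[OF sub]) (simp add: sets_Lq S'sets)
    also have "\<dots> = emeasure lborel ({0..<real q} \<inter> {u. \<lfloor>c * u\<rfloor> \<in> S'}) / ennreal (real q)"
      by (rule Lq_em[OF S'sets])
    also have "\<dots> \<le> emeasure lborel {u. \<lfloor>c * u\<rfloor> \<in> S'} / ennreal (real q)"
      by (intro divide_right_mono_ennreal emeasure_mono) (simp_all add: S'sets)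
    also have "\<dots> = ennreal (real (card S') / c) / ennreal (real q)"
      using floor_set_measure[OF c0 S'(1)] by simp
    also have "\<dots> = ennreal (real (card S') / c / real q)" using q0 c0 by (simp add: divide_ennreal)
    finally have le1: "emeasure M S3 \<le> ennreal (real (card S') / c / real q)" .
    have m1: "measure M S3 \<le> real (card S') / c / real q"
      using le1 finite_measure.emeasure_eq_measure[OF finM, of S3] c0 q0 by (simp add: ennreal_le_iff)
    have "real (card S') \<le> real (card B) * real p ^ d"
      using S'(2) cardK by (simp flip: of_nat_power of_nat_mult)
    then have "real (card S') / c / real q \<le> real (card B) * real p ^ d / c / real q"
      using c0 q0 by (simp add: divide_right_mono)
    also have "\<dots> = real (card B) / (real p ^ N * real p ^ Suc N)"
      unfolding c_def qreal using p1 by (simp add: power_add field_simps)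
    also have "\<dots> \<le> (real p powr (real N / 2 + 1) / real (card B))^2 * (real (card B) / real p ^ Suc N) ^ 3"
      by (rule final_arith) (use p1 Bpos in simp_all)
    also have "\<dots> = (real CARD('p) powr (real N / 2 + 1) / real (card B)) ^ 2 * measure M A ^ 3"
      unfolding mA qreal p_def ..
    finally show ?thesis using m1 unfolding S3_def by linarith
  qed
  have strict: "(real CARD('p) powr (real N / 2 + 1) / real (card B)) ^ 2 * measure M A ^ 3 < measure M A ^ 3"
    by (rule final_strict) (use Bbig mA_pos in simp_all)
  show ?thesis
    using mpsMT A_M mA_pos triple strict by blast
qed


end
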